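(* For $n\ge1$ let $\mathbb{A}_n$ be $\mathbb{C}^n$ with basis $e_1,\dots,e_n$ and product $(a\cdot b)^i=a^ib^n$, i.e. $e_i\cdot e_j=\delta_j^n e_i$. Then for every $n$, $\mathbb{A}_n$ is an associative Novikov algebra; if $n\ge2$ it is non-commutative and the Lie algebra $(\mathbb{A}_n,[a,b]=a\cdot b-b\cdot a)$ is not nilpotent. Moreover: (i) every symmetric bilinear form $g$ on $\mathbb{A}_n$ satisfies $g(a\cdot b,c)=g(a,c\cdot b)$ for all $a,b,c$; (ii) a skew-symmetric bilinear form $f=(f_{ij})$ on $\mathbb{A}_n$ satisfies $f(a\cdot b,c)=f(a,c\cdot b)$ and $f(a\cdot b,c)+f(b\cdot c,a)+f(c\cdot a,b)=0$ for all $a,b,c$ if and only if $f_{ij}=0$ whenever $i\ne n$ and $j\ne n$; (iii) a symmetric bilinear form $h=(h_{ij})$ on $\mathbb{A}_n$ satisfies $h(a\cdot b,c)=h(a,c\cdot b)$ and $h(a,b\cdot c)=h(a,c\cdot b)$ for all $a,b,c$ (i.e. $h(a\cdot b,c)$ is totally symmetric) if and only if $h_{ij}=0$ whenever $i\ne n$ or $j\ne n$.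
   Context: A Novikov algebra is a complex vector space with a bilinear product $\cdot$ satisfying $(a\cdot b)\cdot c=(a\cdot c)\cdot b$ and $(a\cdot b)\cdot c-a\cdot(b\cdot c)=(b\cdot a)\cdot c-b\cdot(a\cdot c)$ for all $a,b,c$. For a bilinear form $f$, $f_{ij}=f(e_i,e_j)$. *)

theory Defs
  imports Complex_Main "HOL-Library.Function_Algebras"
begin

text \<open>The space C^n, realised as functions nat => complex supported on the
index set {1..n}; coordinate i of a vector a is a i.\<close>

definition Cn :: "nat \<Rightarrow> (nat \<Rightarrow> complex) set" where
  "Cn n = {a. \<forall>i. i \<notin> {1..n} \<longrightarrow> a i = 0}"

definition basis_vec :: "nat \<Rightarrow> nat \<Rightarrow> complex" where
  "basis_vec i = (\<lambda>k. if k = i then 1 else 0)"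

definition A_mult :: "nat \<Rightarrow> (nat \<Rightarrow> complex) \<Rightarrow> (nat \<Rightarrow> complex) \<Rightarrow> (nat \<Rightarrow> complex)" where
  "A_mult n a b = (\<lambda>i. if i \<in> {1..n} then a i * b n else 0)"

definition is_associative :: "'v set \<Rightarrow> ('v \<Rightarrow> 'v \<Rightarrow> 'v) \<Rightarrow> bool" where
  "is_associative V m \<longleftrightarrow> (\<forall>a\<in>V. \<forall>b\<in>V. \<forall>c\<in>V. m (m a b) c = m a (m b c))"

definition is_novikov :: "'v set \<Rightarrow> ('v::ab_group_add \<Rightarrow> 'v \<Rightarrow> 'v) \<Rightarrow> bool" where
  "is_novikov V m \<longleftrightarrow> (\<forall>a\<in>V. \<forall>b\<in>V. \<forall>c\<in>V.
      m (m a b) c = m (m a c) b \<and>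
      m (m a b) c - m a (m b c) = m (m b a) c - m b (m a c))"

definition is_commutative :: "'v set \<Rightarrow> ('v \<Rightarrow> 'v \<Rightarrow> 'v) \<Rightarrow> bool" where
  "is_commutative V m \<longleftrightarrow> (\<forall>a\<in>V. \<forall>b\<in>V. m a b = m b a)"

definition commutator :: "('v::ab_group_add \<Rightarrow> 'v \<Rightarrow> 'v) \<Rightarrow> 'v \<Rightarrow> 'v \<Rightarrow> 'v" where
  "commutator m a b = m a b - m b a"

inductive_set cspan :: "(nat \<Rightarrow> complex) set \<Rightarrow> (nat \<Rightarrow> complex) set" for S where
  cspan_zero: "0 \<in> cspan S"
| cspan_gen: "x \<in> S \<Longrightarrow> x \<in> cspan S"
| cspan_add: "x \<in> cspan S \<Longrightarrow> y \<in> cspan S \<Longrightarrow> x + y \<in> cspan S"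
| cspan_smult: "x \<in> cspan S \<Longrightarrow> (\<lambda>i. c * x i) \<in> cspan S"

fun lower_central :: "(nat \<Rightarrow> complex) set \<Rightarrow> ((nat \<Rightarrow> complex) \<Rightarrow> (nat \<Rightarrow> complex) \<Rightarrow> (nat \<Rightarrow> complex))
    \<Rightarrow> nat \<Rightarrow> (nat \<Rightarrow> complex) set" where
  "lower_central V m 0 = V"
| "lower_central V m (Suc k) = cspan {commutator m x y | x y. x \<in> V \<and> y \<in> lower_central V m k}"

definition lie_nilpotent :: "(nat \<Rightarrow> complex) set \<Rightarrow> ((nat \<Rightarrow> complex) \<Rightarrow> (nat \<Rightarrow> complex) \<Rightarrow> (nat \<Rightarrow> complex)) \<Rightarrow> bool" where
  "lie_nilpotent V m \<longleftrightarrow> (\<exists>k. lower_central V m k = {0})"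

definition bilinear_form_on :: "(nat \<Rightarrow> complex) set \<Rightarrow> ((nat \<Rightarrow> complex) \<Rightarrow> (nat \<Rightarrow> complex) \<Rightarrow> complex) \<Rightarrow> bool" where
  "bilinear_form_on V B \<longleftrightarrow>
     (\<forall>a\<in>V. \<forall>a'\<in>V. \<forall>b\<in>V. \<forall>c::complex.
        B (\<lambda>i. a i + a' i) b = B a b + B a' b \<and> B (\<lambda>i. c * a i) b = c * B a b \<and>
        B b (\<lambda>i. a i + a' i) = B b a + B b a' \<and> B b (\<lambda>i. c * a i) = c * B b a)"

definition symmetric_form_on :: "'v set \<Rightarrow> ('v \<Rightarrow> 'v \<Rightarrow> complex) \<Rightarrow> bool" where
  "symmetric_form_on V B \<longleftrightarrow> (\<forall>a\<in>V. \<forall>b\<in>V. B a b = B b a)"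

definition skew_form_on :: "'v set \<Rightarrow> ('v \<Rightarrow> 'v \<Rightarrow> complex) \<Rightarrow> bool" where
  "skew_form_on V B \<longleftrightarrow> (\<forall>a\<in>V. \<forall>b\<in>V. B a b = - B b a)"

end

theory Submission
  imports Defs
begin

lemma bil:
  assumes "bilinear_form_on V B" "a \<in> V" "a' \<in> V" "b \<in> V"
  shows "B (\<lambda>i. a i + a' i) b = B a b + B a' b" "B (\<lambda>i. c * a i) b = c * B a b"
        "B b (\<lambda>i. a i + a' i) = B b a + B b a'" "B b (\<lambda>i. c * a i) = c * B b a"
  using assms unfolding bilinear_form_on_def by simp_all

definition vS :: "nat set \<Rightarrow> (nat \<Rightarrow> complex) \<Rightarrow> nat \<Rightarrow> complex" where
  "vS S a = (\<lambda>k. if k \<in> S then a k else 0)"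

lemma bv_Cn: "i \<in> {1..n} \<Longrightarrow> basis_vec i \<in> Cn n"
  by (auto simp: Cn_def basis_vec_def)

lemma smult_Cn: "x \<in> Cn n \<Longrightarrow> (\<lambda>k. c * x k) \<in> Cn n"
  by (auto simp: Cn_def)

lemma vS_Cn: "S \<subseteq> {1..n} \<Longrightarrow> vS S a \<in> Cn n"
  by (auto simp: Cn_def vS_def)

lemma vS_insert: "x \<notin> S \<Longrightarrow> vS (insert x S) a = (\<lambda>k. vS S a k + (\<lambda>k. a x * basis_vec x k) k)"
  by (auto simp: vS_def basis_vec_def fun_eq_iff)

lemma vS_full: "a \<in> Cn n \<Longrightarrow> vS {1..n} a = a"
  by (auto simp: vS_def Cn_def fun_eq_iff)

lemma vS_empty: "vS {} a = (\<lambda>i. 0 * a i)"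
  by (auto simp: vS_def)

lemma lin1:
  assumes B: "bilinear_form_on (Cn n) B" and b: "b \<in> Cn n" and a: "a \<in> Cn n"
    and S: "finite S" "S \<subseteq> {1..n}"
  shows "B (vS S a) b = (\<Sum>i\<in>S. a i * B (basis_vec i) b)"
  using S
proof (induction S rule: finite_induct)
  case empty
  have "B (\<lambda>i. 0 * a i) b = 0 * B a b" using bil(2)[OF B a a b] .
  then show ?case by (simp add: vS_empty)
next
  case (insert x S)
  have x: "basis_vec x \<in> Cn n" using insert by (auto intro: bv_Cn)
  have "B (vS (insert x S) a) b = B (vS S a) b + B (\<lambda>k. a x * basis_vec x k) b"
    unfolding vS_insert[OF insert(2)] by (rule bil(1)[OF B vS_Cn smult_Cn[OF x] b]) (use insert in auto)
  also have "B (\<lambda>k. a x * basis_vec x k) b = a x * B (basis_vec x) b"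
    by (rule bil(2)[OF B x x b])
  finally show ?case using insert by simp
qed

lemma lin2:
  assumes B: "bilinear_form_on (Cn n) B" and b: "b \<in> Cn n" and a: "a \<in> Cn n"
    and S: "finite S" "S \<subseteq> {1..n}"
  shows "B b (vS S a) = (\<Sum>i\<in>S. a i * B b (basis_vec i))"
  using S
proof (induction S rule: finite_induct)
  case empty
  have "B b (\<lambda>i. 0 * a i) = 0 * B b a" using bil(4)[OF B a a b] .
  then show ?case by (simp add: vS_empty)
next
  case (insert x S)
  have x: "basis_vec x \<in> Cn n" using insert by (auto intro: bv_Cn)
  have "B b (vS (insert x S) a) = B b (vS S a) + B b (\<lambda>k. a x * basis_vec x k)"
    unfolding vS_insert[OF insert(2)] by (rule bil(3)[OF B vS_Cn smult_Cn[OF x] b]) (use insert in auto)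
  also have "B b (\<lambda>k. a x * basis_vec x k) = a x * B b (basis_vec x)"
    by (rule bil(4)[OF B x x b])
  finally show ?case using insert by simp
qed

lemma expand:
  assumes B: "bilinear_form_on (Cn n) B" and a: "a \<in> Cn n" and b: "b \<in> Cn n"
  shows "B a b = (\<Sum>i\<in>{1..n}. \<Sum>j\<in>{1..n}. a i * b j * B (basis_vec i) (basis_vec j))"
proof -
  have "B a b = (\<Sum>i\<in>{1..n}. a i * B (basis_vec i) b)"
    using lin1[OF B b a, of "{1..n}"] vS_full[OF a] by simp
  also have "\<dots> = (\<Sum>i\<in>{1..n}. a i * (\<Sum>j\<in>{1..n}. b j * B (basis_vec i) (basis_vec j)))"
    using lin2[OF B _ b, of _ "{1..n}"] vS_full[OF b] bv_Cn by (intro sum.cong) auto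
  finally show ?thesis by (simp add: sum_distrib_left mult.assoc mult.left_commute)
qed

lemma mult_eq: "a \<in> Cn n \<Longrightarrow> A_mult n a b = (\<lambda>i. b n * a i)"
  by (auto simp: A_mult_def Cn_def fun_eq_iff)

lemma mult_Cn: "A_mult n a b \<in> Cn n"
  by (auto simp: A_mult_def Cn_def)

lemma sumid:
  fixes a c :: "nat \<Rightarrow> complex"
  assumes F: "\<And>i j. i \<in> {1..n} \<Longrightarrow> j \<in> {1..n} \<Longrightarrow> F i j = (if i = n then F n j else 0) - (if j = n then F n i else 0)"
    and n: "n \<ge> 1"
  shows "(\<Sum>i\<in>{1..n}. \<Sum>j\<in>{1..n}. a i * c j * F i j)
       = a n * (\<Sum>j\<in>{1..n}. c j * F n j) - c n * (\<Sum>i\<in>{1..n}. a i * F n i)"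
proof -
  have "(\<Sum>i\<in>{1..n}. \<Sum>j\<in>{1..n}. a i * c j * F i j)
     = (\<Sum>i\<in>{1..n}. \<Sum>j\<in>{1..n}. (if i = n then a n * (c j * F n j) else 0) - (if j = n then c n * (a i * F n i) else 0))"
    by (intro sum.cong refl, subst F) (auto simp: algebra_simps)
  also have "\<dots> = a n * (\<Sum>j\<in>{1..n}. c j * F n j) - c n * (\<Sum>i\<in>{1..n}. a i * F n i)"
  proof -
    have e: "(\<Sum>i\<in>{1..n}. \<Sum>j\<in>{1..n}. (if i = n then a n * (c j * F n j) else 0))
       = (\<Sum>i\<in>{1..n}. (if i = n then (\<Sum>j\<in>{1..n}. a n * (c j * F n j)) else 0))"
      by (intro sum.cong refl) auto
    also have "\<dots> = a n * (\<Sum>j\<in>{1..n}. c j * F n j)"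
      using n by (simp add: sum_distrib_left)
    finally have e1: "(\<Sum>i\<in>{1..n}. \<Sum>j\<in>{1..n}. (if i = n then a n * (c j * F n j) else 0)) = a n * (\<Sum>j\<in>{1..n}. c j * F n j)" .
    have e2: "(\<Sum>i\<in>{1..n}. \<Sum>j\<in>{1..n}. (if j = n then c n * (a i * F n i) else 0)) = c n * (\<Sum>i\<in>{1..n}. a i * F n i)"
      using n by (simp add: sum_distrib_left)
    show ?thesis by (simp only: sum_subtractf e1 e2)
  qed
  finally show ?thesis .
qed

lemma comm_e1:
  assumes n: "n \<ge> 2"
  shows "commutator (A_mult n) (basis_vec n) (basis_vec 1) = (\<lambda>i. - basis_vec 1 i)"
  using n by (auto simp: commutator_def A_mult_def basis_vec_def fun_eq_iff)

lemma e1_lc: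
  assumes n: "n \<ge> 2"
  shows "basis_vec 1 \<in> lower_central (Cn n) (A_mult n) k"
proof (induction k)
  case 0
  then show ?case using n by (simp add: bv_Cn)
next
  case (Suc k)
  let ?G = "{commutator (A_mult n) x y | x y. x \<in> Cn n \<and> y \<in> lower_central (Cn n) (A_mult n) k}"
  have nC: "basis_vec n \<in> Cn n" using n by (intro bv_Cn) auto
  have "commutator (A_mult n) (basis_vec n) (basis_vec 1) \<in> ?G"
    using nC Suc.IH by (intro CollectI exI conjI refl) (rule refl)
  hence "(\<lambda>i. - basis_vec 1 i) \<in> cspan ?G"
    unfolding comm_e1[OF n] by (rule cspan_gen)
  hence "(\<lambda>i. (-1) * (\<lambda>i. - basis_vec 1 i) i) \<in> cspan ?G"
    by (rule cspan_smult)
  then show ?case by simp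
qed

lemma smul1:
  assumes B: "bilinear_form_on (Cn n) B" and a: "a \<in> Cn n" and b: "b \<in> Cn n"
  shows "B (\<lambda>i. c * a i) b = c * B a b" "B b (\<lambda>i. c * a i) = c * B b a"
  using bil(2)[OF B a a b] bil(4)[OF B a a b] by auto

theorem proposition6p1:
  fixes n :: nat
  assumes "n \<ge> 1"
  shows "is_associative (Cn n) (A_mult n)
    \<and> is_novikov (Cn n) (A_mult n)
    \<and> (n \<ge> 2 \<longrightarrow> \<not> is_commutative (Cn n) (A_mult n)
                \<and> \<not> lie_nilpotent (Cn n) (A_mult n))
    \<and> (\<forall>g. bilinear_form_on (Cn n) g \<and> symmetric_form_on (Cn n) g \<longrightarrow>
          (\<forall>a\<in>Cn n. \<forall>b\<in>Cn n. \<forall>c\<in>Cn n. g (A_mult n a b) c = g a (A_mult n c b)))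
    \<and> (\<forall>f. bilinear_form_on (Cn n) f \<and> skew_form_on (Cn n) f \<longrightarrow>
          ((\<forall>a\<in>Cn n. \<forall>b\<in>Cn n. \<forall>c\<in>Cn n.
              f (A_mult n a b) c = f a (A_mult n c b) \<and>
              f (A_mult n a b) c + f (A_mult n b c) a + f (A_mult n c a) b = 0)
           \<longleftrightarrow> (\<forall>i\<in>{1..n}. \<forall>j\<in>{1..n}. i \<noteq> n \<and> j \<noteq> n \<longrightarrow> f (basis_vec i) (basis_vec j) = 0)))
    \<and> (\<forall>h. bilinear_form_on (Cn n) h \<and> symmetric_form_on (Cn n) h \<longrightarrow>
          ((\<forall>a\<in>Cn n. \<forall>b\<in>Cn n. \<forall>c\<in>Cn n.
              h (A_mult n a b) c = h a (A_mult n c b) \<and>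
              h a (A_mult n b c) = h a (A_mult n c b))
           \<longleftrightarrow> (\<forall>i\<in>{1..n}. \<forall>j\<in>{1..n}. i \<noteq> n \<or> j \<noteq> n \<longrightarrow> h (basis_vec i) (basis_vec j) = 0)))"
proof -
  have nn: "n \<in> {1..n}" using assms by auto
  have P1: "is_associative (Cn n) (A_mult n)"
    using nn by (auto simp: is_associative_def A_mult_def fun_eq_iff)
  have P2: "is_novikov (Cn n) (A_mult n)"
    using nn by (auto simp: is_novikov_def A_mult_def fun_eq_iff)
  have P3: "n \<ge> 2 \<longrightarrow> \<not> is_commutative (Cn n) (A_mult n) \<and> \<not> lie_nilpotent (Cn n) (A_mult n)"
  proof
    assume n2: "n \<ge> 2"
    have "A_mult n (basis_vec 1) (basis_vec n) 1 \<noteq> A_mult n (basis_vec n) (basis_vec 1) 1"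
      using n2 by (simp add: A_mult_def basis_vec_def)
    hence "\<not> is_commutative (Cn n) (A_mult n)"
      unfolding is_commutative_def using bv_Cn[of 1 n] bv_Cn[OF nn] n2 by force
    moreover have "\<not> lie_nilpotent (Cn n) (A_mult n)"
    proof
      assume "lie_nilpotent (Cn n) (A_mult n)"
      then obtain k where "lower_central (Cn n) (A_mult n) k = {0}" unfolding lie_nilpotent_def by blast
      hence "basis_vec 1 = 0" using e1_lc[OF n2, of k] by simp
      hence "basis_vec 1 1 = 0" by simp
      thus False by (simp add: basis_vec_def)
    qed
    ultimately show "\<not> is_commutative (Cn n) (A_mult n) \<and> \<not> lie_nilpotent (Cn n) (A_mult n)" ..
  qed
  have P4: "\<And>g a b c. bilinear_form_on (Cn n) g \<Longrightarrow> a \<in> Cn n \<Longrightarrow> b \<in> Cn n \<Longrightarrow> c \<in> Cn n \<Longrightarrow>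
      g (A_mult n a b) c = g a (A_mult n c b)"
    by (simp add: mult_eq smul1)
  have P5: "\<forall>f. bilinear_form_on (Cn n) f \<and> skew_form_on (Cn n) f \<longrightarrow>
          ((\<forall>a\<in>Cn n. \<forall>b\<in>Cn n. \<forall>c\<in>Cn n.
              f (A_mult n a b) c = f a (A_mult n c b) \<and>
              f (A_mult n a b) c + f (A_mult n b c) a + f (A_mult n c a) b = 0)
           \<longleftrightarrow> (\<forall>i\<in>{1..n}. \<forall>j\<in>{1..n}. i \<noteq> n \<and> j \<noteq> n \<longrightarrow> f (basis_vec i) (basis_vec j) = 0))"
  proof (intro allI impI)
    fix f assume "bilinear_form_on (Cn n) f \<and> skew_form_on (Cn n) f"
    hence B: "bilinear_form_on (Cn n) f" and S: "skew_form_on (Cn n) f" by auto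
    have cyc: "\<And>a b c. a \<in> Cn n \<Longrightarrow> b \<in> Cn n \<Longrightarrow> c \<in> Cn n \<Longrightarrow>
       f (A_mult n a b) c + f (A_mult n b c) a + f (A_mult n c a) b = b n * f a c + c n * f b a + a n * f c b"
      using B by (simp add: mult_eq smul1)
    show "(\<forall>a\<in>Cn n. \<forall>b\<in>Cn n. \<forall>c\<in>Cn n.
              f (A_mult n a b) c = f a (A_mult n c b) \<and>
              f (A_mult n a b) c + f (A_mult n b c) a + f (A_mult n c a) b = 0)
           \<longleftrightarrow> (\<forall>i\<in>{1..n}. \<forall>j\<in>{1..n}. i \<noteq> n \<and> j \<noteq> n \<longrightarrow> f (basis_vec i) (basis_vec j) = 0)"
    proof
      assume H: "\<forall>a\<in>Cn n. \<forall>b\<in>Cn n. \<forall>c\<in>Cn n.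
              f (A_mult n a b) c = f a (A_mult n c b) \<and>
              f (A_mult n a b) c + f (A_mult n b c) a + f (A_mult n c a) b = 0"
      show "\<forall>i\<in>{1..n}. \<forall>j\<in>{1..n}. i \<noteq> n \<and> j \<noteq> n \<longrightarrow> f (basis_vec i) (basis_vec j) = 0"
      proof (intro ballI impI)
        fix i j assume i: "i \<in> {1..n}" and j: "j \<in> {1..n}" and ij: "i \<noteq> n \<and> j \<noteq> n"
        have "f (A_mult n (basis_vec j) (basis_vec i)) (basis_vec n) + f (A_mult n (basis_vec i) (basis_vec n)) (basis_vec j)
           + f (A_mult n (basis_vec n) (basis_vec j)) (basis_vec i) = 0"
          using H bv_Cn[OF i] bv_Cn[OF j] bv_Cn[OF nn] by blast
        thus "f (basis_vec i) (basis_vec j) = 0"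
          using cyc[OF bv_Cn[OF j] bv_Cn[OF i] bv_Cn[OF nn]] ij by (simp add: basis_vec_def)
      qed
    next
      assume Z: "\<forall>i\<in>{1..n}. \<forall>j\<in>{1..n}. i \<noteq> n \<and> j \<noteq> n \<longrightarrow> f (basis_vec i) (basis_vec j) = 0"
      let ?F = "\<lambda>i j. f (basis_vec i) (basis_vec j)"
      have Fnn: "?F n n = 0" using S bv_Cn[OF nn] unfolding skew_form_on_def
        by (metis add_eq_0_iff2 eq_neg_iff_add_eq_0 mult_2 mult_eq_0_iff zero_neq_numeral)
      have Fid: "\<And>i j. i \<in> {1..n} \<Longrightarrow> j \<in> {1..n} \<Longrightarrow> ?F i j = (if i = n then ?F n j else 0) - (if j = n then ?F n i else 0)"
      proof -
        fix i j assume i: "i \<in> {1..n}" and j: "j \<in> {1..n}"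
        have sk: "?F i n = - ?F n i" using S bv_Cn[OF i] bv_Cn[OF nn] unfolding skew_form_on_def by blast
        show "?F i j = (if i = n then ?F n j else 0) - (if j = n then ?F n i else 0)"
          using Z i j sk Fnn by auto
      qed
      let ?phi = "\<lambda>x. (\<Sum>j\<in>{1..n}. x j * ?F n j)"
      have fexp: "\<And>a c. a \<in> Cn n \<Longrightarrow> c \<in> Cn n \<Longrightarrow> f a c = a n * ?phi c - c n * ?phi a"
        using expand[OF B] sumid[of n ?F, OF Fid] assms by simp
      show "\<forall>a\<in>Cn n. \<forall>b\<in>Cn n. \<forall>c\<in>Cn n.
              f (A_mult n a b) c = f a (A_mult n c b) \<and>
              f (A_mult n a b) c + f (A_mult n b c) a + f (A_mult n c a) b = 0"
      proof (intro ballI conjI)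
        fix a b c assume a: "a \<in> Cn n" and b: "b \<in> Cn n" and c: "c \<in> Cn n"
        show "f (A_mult n a b) c = f a (A_mult n c b)" using P4[OF B a b c] .
        show "f (A_mult n a b) c + f (A_mult n b c) a + f (A_mult n c a) b = 0"
          using cyc[OF a b c] fexp[OF a c] fexp[OF b a] fexp[OF c b] by (simp add: algebra_simps)
      qed
    qed
  qed
  have P6: "\<forall>h. bilinear_form_on (Cn n) h \<and> symmetric_form_on (Cn n) h \<longrightarrow>
          ((\<forall>a\<in>Cn n. \<forall>b\<in>Cn n. \<forall>c\<in>Cn n.
              h (A_mult n a b) c = h a (A_mult n c b) \<and>
              h a (A_mult n b c) = h a (A_mult n c b))
           \<longleftrightarrow> (\<forall>i\<in>{1..n}. \<forall>j\<in>{1..n}. i \<noteq> n \<or> j \<noteq> n \<longrightarrow> h (basis_vec i) (basis_vec j) = 0))"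
  proof (intro allI impI)
    fix h assume "bilinear_form_on (Cn n) h \<and> symmetric_form_on (Cn n) h"
    hence B: "bilinear_form_on (Cn n) h" and S: "symmetric_form_on (Cn n) h" by auto
    have r: "\<And>a b c. a \<in> Cn n \<Longrightarrow> b \<in> Cn n \<Longrightarrow> c \<in> Cn n \<Longrightarrow>
       (h a (A_mult n b c) = h a (A_mult n c b)) = (c n * h a b = b n * h a c)"
      using B by (simp add: mult_eq smul1)
    show "(\<forall>a\<in>Cn n. \<forall>b\<in>Cn n. \<forall>c\<in>Cn n.
              h (A_mult n a b) c = h a (A_mult n c b) \<and>
              h a (A_mult n b c) = h a (A_mult n c b))
           \<longleftrightarrow> (\<forall>i\<in>{1..n}. \<forall>j\<in>{1..n}. i \<noteq> n \<or> j \<noteq> n \<longrightarrow> h (basis_vec i) (basis_vec j) = 0)"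
    proof
      assume H: "\<forall>a\<in>Cn n. \<forall>b\<in>Cn n. \<forall>c\<in>Cn n.
              h (A_mult n a b) c = h a (A_mult n c b) \<and>
              h a (A_mult n b c) = h a (A_mult n c b)"
      have K: "\<And>i j. i \<in> {1..n} \<Longrightarrow> j \<in> {1..n} \<Longrightarrow> j \<noteq> n \<Longrightarrow> h (basis_vec i) (basis_vec j) = 0"
      proof -
        fix i j assume i: "i \<in> {1..n}" and j: "j \<in> {1..n}" and jn: "j \<noteq> n"
        have "h (basis_vec i) (A_mult n (basis_vec j) (basis_vec n)) = h (basis_vec i) (A_mult n (basis_vec n) (basis_vec j))"
          using H bv_Cn[OF i] bv_Cn[OF j] bv_Cn[OF nn] by blast
        thus "h (basis_vec i) (basis_vec j) = 0"
          using r[OF bv_Cn[OF i] bv_Cn[OF j] bv_Cn[OF nn]] jn by (simp add: basis_vec_def)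
      qed
      show "\<forall>i\<in>{1..n}. \<forall>j\<in>{1..n}. i \<noteq> n \<or> j \<noteq> n \<longrightarrow> h (basis_vec i) (basis_vec j) = 0"
      proof (intro ballI impI)
        fix i j assume i: "i \<in> {1..n}" and j: "j \<in> {1..n}" and ij: "i \<noteq> n \<or> j \<noteq> n"
        show "h (basis_vec i) (basis_vec j) = 0"
        proof (cases "j = n")
          case True
          hence "i \<noteq> n" using ij by auto
          hence "h (basis_vec j) (basis_vec i) = 0" using K i j by auto
          thus ?thesis using S bv_Cn[OF i] bv_Cn[OF j] unfolding symmetric_form_on_def by metis
        next
          case False thus ?thesis using K i j by auto
        qed
      qed
    next
      assume Z: "\<forall>i\<in>{1..n}. \<forall>j\<in>{1..n}. i \<noteq> n \<or> j \<noteq> n \<longrightarrow> h (basis_vec i) (basis_vec j) = 0"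
      let ?F = "\<lambda>i j. h (basis_vec i) (basis_vec j)"
      have hexp: "\<And>a c. a \<in> Cn n \<Longrightarrow> c \<in> Cn n \<Longrightarrow> h a c = a n * c n * ?F n n"
      proof -
        fix a c assume a: "a \<in> Cn n" and c: "c \<in> Cn n"
        have "h a c = (\<Sum>i\<in>{1..n}. \<Sum>j\<in>{1..n}. a i * c j * ?F i j)" by (rule expand[OF B a c])
        also have "\<dots> = (\<Sum>i\<in>{1..n}. \<Sum>j\<in>{1..n}. if i = n then (if j = n then a n * c n * ?F n n else 0) else 0)"
          using Z by (intro sum.cong refl) auto
        also have "\<dots> = (\<Sum>i\<in>{1..n}. if i = n then (\<Sum>j\<in>{1..n}. if j = n then a n * c n * ?F n n else 0) else 0)"
          by (intro sum.cong refl) auto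
        also have "\<dots> = a n * c n * ?F n n" using nn by (simp only: sum.delta finite_atLeastAtMost if_True)
        finally show "h a c = a n * c n * ?F n n" .
      qed
      show "\<forall>a\<in>Cn n. \<forall>b\<in>Cn n. \<forall>c\<in>Cn n.
              h (A_mult n a b) c = h a (A_mult n c b) \<and>
              h a (A_mult n b c) = h a (A_mult n c b)"
      proof (intro ballI conjI)
        fix a b c assume a: "a \<in> Cn n" and b: "b \<in> Cn n" and c: "c \<in> Cn n"
        show "h (A_mult n a b) c = h a (A_mult n c b)" using P4[OF B a b c] .
        show "h a (A_mult n b c) = h a (A_mult n c b)"
          using r[OF a b c] hexp[OF a b] hexp[OF a c] by (simp add: algebra_simps)
      qed
    qed
  qed
  have P4': "\<forall>g. bilinear_form_on (Cn n) g \<and> symmetric_form_on (Cn n) g \<longrightarrow>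
          (\<forall>a\<in>Cn n. \<forall>b\<in>Cn n. \<forall>c\<in>Cn n. g (A_mult n a b) c = g a (A_mult n c b))"
    using P4 by blast
  show ?thesis by (intro conjI P1 P2 P3 P4' P5 P6)
qed

end
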